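(* For each positive integer $k$, the graph $K_{k+1,\lfloor (k+1)^2/4\rfloor}$ admits a balanced $k$-page embedding.
   Context: A book with $k$ pages consists of a line (the spine) and $k$ half-planes (the pages) whose common boundary is the spine. A $k$-page embedding places all vertices on the spine and each edge inside a single page with no crossings. In $K_{k+1,s}$ call the $k+1$ vertices of degree $s$ black and the $s$ vertices of degree $k+1$ white. The load of a white vertex $v$ in a page is the number of edges incident with $v$ drawn in that page. A $k$-page embedding of $K_{k+1,s}$ is balanced if every white vertex has load exactly $1$ in $k-1$ of the pages (hence load $2$ in the remaining page). *)

theory Defs
  imports Main
begin

text \<open>Placing the vertices on the spine
is an injective map pos : V -> nat (the order along the spine); each edge goes to one of the
pages 0..k-1. Two edges drawn in the same page cross iff their endpoints interleave strictly
along the spine.\<close>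

definition crossing :: "nat \<Rightarrow> nat \<Rightarrow> nat \<Rightarrow> nat \<Rightarrow> bool" where
  "crossing a b c d \<longleftrightarrow>
     (min a b < min c d \<and> min c d < max a b \<and> max a b < max c d) \<or>
     (min c d < min a b \<and> min a b < max c d \<and> max c d < max a b)"

definition book_embedding ::
  "nat \<Rightarrow> 'v set \<Rightarrow> 'v set set \<Rightarrow> ('v \<Rightarrow> nat) \<Rightarrow> ('v set \<Rightarrow> nat) \<Rightarrow> bool" where
  "book_embedding k V E pos page \<longleftrightarrow>
     inj_on pos V \<and>
     (\<forall>e\<in>E. page e < k) \<and>
     (\<forall>e\<in>E. \<forall>f\<in>E. \<forall>u v x y. e = {u, v} \<and> f = {x, y} \<and> page e = page f
         \<longrightarrow> \<not> crossing (pos u) (pos v) (pos x) (pos y))"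

text \<open>The complete bipartite graph K_{m,s}: black vertices Inl i (i < m),
white vertices Inr j (j < s).\<close>

definition KV :: "nat \<Rightarrow> nat \<Rightarrow> (nat + nat) set" where
  "KV m s = Inl ` {..<m} \<union> Inr ` {..<s}"

definition KE :: "nat \<Rightarrow> nat \<Rightarrow> (nat + nat) set set" where
  "KE m s = {{Inl i, Inr j} | i j. i < m \<and> j < s}"

definition load :: "nat \<Rightarrow> ((nat + nat) set \<Rightarrow> nat) \<Rightarrow> nat \<Rightarrow> nat \<Rightarrow> nat" where
  "load m page j p = card {i. i < m \<and> page {Inl i, Inr j} = p}"

definition balanced_embedding ::
  "nat \<Rightarrow> nat \<Rightarrow> ((nat + nat) \<Rightarrow> nat) \<Rightarrow> ((nat + nat) set \<Rightarrow> nat) \<Rightarrow> bool" where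
  "balanced_embedding k s pos page \<longleftrightarrow>
     book_embedding k (KV (k+1) s) (KE (k+1) s) pos page \<and>
     (\<forall>j<s. card {p. p < k \<and> load (k+1) page j p = 1} = k - 1)"

end

theory Submission
  imports Defs
begin

definition Wp :: "nat \<Rightarrow> nat \<Rightarrow> nat \<Rightarrow> nat" where
  "Wp b r t = (b+1)*(r+1)+t"
definition Xq :: "nat \<Rightarrow> nat \<Rightarrow> nat" where
  "Xq b ii = (b+1)*(ii+1)+b"
definition Bp :: "nat \<Rightarrow> nat \<Rightarrow> nat" where
  "Bp b i = (if i \<le> b then i else Xq b (i-b-1))"
definition pg :: "nat \<Rightarrow> nat \<Rightarrow> nat \<Rightarrow> nat \<Rightarrow> nat" where
  "pg b i r t = (if i \<le> b then (if i \<le> t then r+i else r+i-1)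
                 else (if i-b-1 < r then i-b-1 else i-1))"

lemma Wp_gt: "b < Wp b r t"
  unfolding Wp_def by (simp add: algebra_simps)

lemma Xq_gt: "b < Xq b ii"
  unfolding Xq_def by (simp add: algebra_simps)

lemma Wp_lt_aux: assumes "t < b" "r < r'" shows "Wp b r t < Wp b r' t'"
proof -
  have "Wp b r t < (b+1)*(r+1)+(b+1)" unfolding Wp_def using assms by simp
  also have "\<dots> = (b+1)*(Suc r + 1)" by (simp add: algebra_simps)
  also have "\<dots> \<le> (b+1)*(r'+1)" using assms by (intro mult_le_mono2) simp
  also have "\<dots> \<le> Wp b r' t'" unfolding Wp_def by simp
  finally show ?thesis .
qed

lemma Wp_less: assumes "t < b" "t' < b"
  shows "Wp b r t < Wp b r' t' \<longleftrightarrow> (r < r' \<or> r = r' \<and> t < t')"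
proof
  assume h: "Wp b r t < Wp b r' t'"
  show "r < r' \<or> r = r' \<and> t < t'"
  proof (rule ccontr)
    assume "\<not> (r < r' \<or> r = r' \<and> t < t')"
    then have "r' < r \<or> r = r' \<and> t' \<le> t" by auto
    then show False
    proof
      assume "r' < r" then have "Wp b r' t' < Wp b r t" using Wp_lt_aux assms by blast
      then show False using h by simp
    next
      assume "r = r' \<and> t' \<le> t" then show False using h unfolding Wp_def by simp
    qed
  qed
next
  assume "r < r' \<or> r = r' \<and> t < t'"
  then show "Wp b r t < Wp b r' t'"
    using Wp_lt_aux assms unfolding Wp_def by auto
qed

lemma Xq_Wp1: assumes "ii < r" shows "Xq b ii < Wp b r t"
proof -
  have "Xq b ii < (b+1)*(ii+1)+(b+1)" unfolding Xq_def by simp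
  also have "\<dots> = (b+1)*(Suc ii + 1)" by (simp add: algebra_simps)
  also have "\<dots> \<le> (b+1)*(r+1)" using assms by (intro mult_le_mono2) simp
  also have "\<dots> \<le> Wp b r t" unfolding Wp_def by simp
  finally show ?thesis .
qed

lemma Xq_Wp2: assumes "r \<le> ii" "t < b" shows "Wp b r t < Xq b ii"
proof -
  have "Wp b r t < (b+1)*(r+1)+b" unfolding Wp_def using assms by simp
  also have "\<dots> \<le> (b+1)*(ii+1)+b" using assms by (intro add_le_mono1 mult_le_mono2) simp
  finally show ?thesis unfolding Xq_def .
qed

lemma Xq_Wp: assumes "t < b"
  shows "Xq b ii < Wp b r t \<longleftrightarrow> ii < r" and "Wp b r t < Xq b ii \<longleftrightarrow> r \<le> ii"
  using Xq_Wp1[of ii r b t] Xq_Wp2[of r ii t b] assms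
  by (metis not_less order_less_asym)+

lemma Xq_inj: assumes "Xq b ii = Xq b jj" shows "ii = jj"
proof -
  have "(b+1)*(ii+1) = (b+1)*(jj+1)" using assms unfolding Xq_def by simp
  then have "ii+1 = jj+1" by (subst (asm) mult_left_cancel) simp_all
  then show ?thesis by simp
qed

lemma cr_sym1: "crossing a b c d = crossing b a c d"
  unfolding crossing_def by (simp add: min.commute max.commute)
lemma cr_sym2: "crossing a b c d = crossing c d a b"
  unfolding crossing_def by auto
lemma cr_share: "\<not> crossing x y x z"
  unfolding crossing_def min_def max_def by auto
lemma cr_L: "l < w \<Longrightarrow> l < x \<Longrightarrow> l < w' \<Longrightarrow>
   crossing l w x w' \<longleftrightarrow> (x < w \<and> w < w') \<or> (w' < w \<and> w < x)"
  unfolding crossing_def min_def max_def by auto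
lemma cr_LL: "l < w \<Longrightarrow> l < w' \<Longrightarrow> l' < w \<Longrightarrow> l' < w' \<Longrightarrow>
   crossing l w l' w' \<longleftrightarrow> (l < l' \<and> w < w') \<or> (l' < l \<and> w' < w)"
  unfolding crossing_def min_def max_def by auto


lemma nc_LL:
  assumes "i \<le> b" "i' \<le> b" "t < b" "t' < b"
    and pe: "pg b i r t = pg b i' r' t'"
  shows "\<not> crossing (Bp b i) (Wp b r t) (Bp b i') (Wp b r' t')"
proof -
  have B: "Bp b i = i" "Bp b i' = i'" using assms unfolding Bp_def by auto
  have pe': "(if i \<le> t then r+i else r+i-1) = (if i' \<le> t' then r'+i' else r'+i'-1)"
    using pe assms unfolding pg_def by simp
  have "i < Wp b r t" "i < Wp b r' t'" "i' < Wp b r t" "i' < Wp b r' t'"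
    using Wp_gt[of b] assms by (meson le_less_trans)+
  then have c: "crossing i (Wp b r t) i' (Wp b r' t') \<longleftrightarrow>
     (i < i' \<and> Wp b r t < Wp b r' t') \<or> (i' < i \<and> Wp b r' t' < Wp b r t)"
    by (rule cr_LL)
  show ?thesis unfolding B c Wp_less[OF assms(3,4)] Wp_less[OF assms(4,3)]
    using pe' by (auto split: if_splits)
qed

lemma nc_LX:
  assumes "i \<le> b" "b < i'" "t < b" "t' < b" "i' < a + b" "a \<le> b"
    and pe: "pg b i r t = pg b i' r' t'"
  shows "\<not> crossing (Bp b i) (Wp b r t) (Bp b i') (Wp b r' t')"
proof -
  define ii where "ii = i' - b - 1"
  have B: "Bp b i = i" "Bp b i' = Xq b ii" using assms unfolding Bp_def ii_def by auto
  have pe': "(if i \<le> t then r+i else r+i-1) = (if ii < r' then ii else ii + b)"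
    using pe assms unfolding pg_def ii_def by simp
  have "i < Wp b r t" "i < Xq b ii" "i < Wp b r' t'"
    using Wp_gt[of b] Xq_gt[of b] assms by (meson le_less_trans)+
  then have c: "crossing i (Wp b r t) (Xq b ii) (Wp b r' t') \<longleftrightarrow>
     (Xq b ii < Wp b r t \<and> Wp b r t < Wp b r' t') \<or> (Wp b r' t' < Wp b r t \<and> Wp b r t < Xq b ii)"
    by (rule cr_L)
  show ?thesis unfolding B c Wp_less[OF assms(3,4)] Wp_less[OF assms(4,3)] Xq_Wp[OF assms(3)]
    using pe' assms(1,3) by (auto split: if_splits)
qed

lemma nc_XX:
  assumes "b < i" "b < i'" "i < a + b" "i' < a + b" "a \<le> b"
    and pe: "pg b i r t = pg b i' r' t'"
  shows "\<not> crossing (Bp b i) (Wp b r t) (Bp b i') (Wp b r' t')"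
proof -
  have "i = i'" using pe assms unfolding pg_def by (auto split: if_splits)
  then show ?thesis using cr_share by simp
qed

lemma noncross:
  assumes "t < b" "t' < b" "i < a + b" "i' < a + b" "a \<le> b"
    and pe: "pg b i r t = pg b i' r' t'"
  shows "\<not> crossing (Bp b i) (Wp b r t) (Bp b i') (Wp b r' t')"
proof (cases "i \<le> b")
  case True
  show ?thesis
  proof (cases "i' \<le> b")
    case True
    then show ?thesis using nc_LL \<open>i \<le> b\<close> assms by blast
  next
    case False
    then show ?thesis using nc_LX[of i b i' t t' a r r'] \<open>i \<le> b\<close> assms by simp
  qed
next
  case False
  show ?thesis
  proof (cases "i' \<le> b")
    case True
    then have "\<not> crossing (Bp b i') (Wp b r' t') (Bp b i) (Wp b r t)"
      using nc_LX[of i' b i t' t a r' r] False assms by simp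
    then show ?thesis using cr_sym2 by metis
  next
    case F2: False
    then show ?thesis using nc_XX[of b i i' a r t r' t'] False assms by simp
  qed
qed


lemma pre1:
  assumes "t < b" "r < a" "a \<le> b" "p < a + b - 1" "p < r"
  shows "{i. i < a + b \<and> pg b i r t = p} = {b+1+p}"
proof (rule set_eqI, rule iffI)
  fix i assume "i \<in> {i. i < a + b \<and> pg b i r t = p}"
  then have "i < a + b" "pg b i r t = p" by auto
  then show "i \<in> {b+1+p}" using assms unfolding pg_def
    by (simp split: if_split_asm; linarith)
next
  fix i assume "i \<in> {b+1+p}"
  then show "i \<in> {i. i < a + b \<and> pg b i r t = p}" using assms unfolding pg_def by auto
qed

lemma pre2:
  assumes "t < b" "r < a" "a \<le> b" "p < a + b - 1" "r \<le> p" "p < r + t"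
  shows "{i. i < a + b \<and> pg b i r t = p} = {p-r}"
proof (rule set_eqI, rule iffI)
  fix i assume "i \<in> {i. i < a + b \<and> pg b i r t = p}"
  then have "i < a + b" "pg b i r t = p" by auto
  then show "i \<in> {p-r}" using assms unfolding pg_def
    by (simp split: if_split_asm; linarith)
next
  fix i assume "i \<in> {p-r}"
  then show "i \<in> {i. i < a + b \<and> pg b i r t = p}" using assms unfolding pg_def by auto
qed

lemma pre3:
  assumes "t < b" "r < a" "a \<le> b" "p < a + b - 1" "p = r + t"
  shows "{i. i < a + b \<and> pg b i r t = p} = {t, t+1}"
proof (rule set_eqI, rule iffI)
  fix i assume "i \<in> {i. i < a + b \<and> pg b i r t = p}"
  then have "i < a + b" "pg b i r t = p" by auto
  then show "i \<in> {t, t+1}" using assms unfolding pg_def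
    by (simp split: if_split_asm; linarith)
next
  fix i assume "i \<in> {t, t+1}"
  then show "i \<in> {i. i < a + b \<and> pg b i r t = p}" using assms unfolding pg_def by auto
qed

lemma pre4:
  assumes "t < b" "r < a" "a \<le> b" "p < a + b - 1" "r + t < p" "p < r + b"
  shows "{i. i < a + b \<and> pg b i r t = p} = {p-r+1}"
proof (rule set_eqI, rule iffI)
  fix i assume "i \<in> {i. i < a + b \<and> pg b i r t = p}"
  then have "i < a + b" "pg b i r t = p" by auto
  then show "i \<in> {p-r+1}" using assms unfolding pg_def
    by (simp split: if_split_asm; linarith)
next
  fix i assume "i \<in> {p-r+1}"
  then show "i \<in> {i. i < a + b \<and> pg b i r t = p}" using assms unfolding pg_def by auto
qed

lemma pre5:
  assumes "t < b" "r < a" "a \<le> b" "p < a + b - 1" "r + b \<le> p"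
  shows "{i. i < a + b \<and> pg b i r t = p} = {p+1}"
proof (rule set_eqI, rule iffI)
  fix i assume "i \<in> {i. i < a + b \<and> pg b i r t = p}"
  then have "i < a + b" "pg b i r t = p" by auto
  then show "i \<in> {p+1}" using assms unfolding pg_def
    by (simp split: if_split_asm; linarith)
next
  fix i assume "i \<in> {p+1}"
  then show "i \<in> {i. i < a + b \<and> pg b i r t = p}" using assms unfolding pg_def by auto
qed

lemma load_card:
  assumes "t < b" "r < a" "a \<le> b" "p < a + b - 1"
  shows "card {i. i < a + b \<and> pg b i r t = p} = (if p = r + t then 2 else 1)"
proof -
  consider "p < r" | "r \<le> p" "p < r + t" | "p = r + t" | "r + t < p" "p < r + b" | "r + b \<le> p"
    by linarith
  then show ?thesis
  proof cases
    case 1 then show ?thesis using pre1[OF assms] by simp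
  next
    case 2 then show ?thesis using pre2[OF assms] by simp
  next
    case 3 then show ?thesis using pre3[OF assms] by simp
  next
    case 4 then show ?thesis using pre4[OF assms] by simp
  next
    case 5 then show ?thesis using pre5[OF assms] assms(1) by simp
  qed
qed

lemma cr_sym3: "crossing a b c d = crossing a b d c"
  unfolding crossing_def by (simp add: min.commute max.commute)

definition posf :: "nat \<Rightarrow> nat + nat \<Rightarrow> nat" where
  "posf b v = (case v of Inl i \<Rightarrow> Bp b i | Inr j \<Rightarrow> Wp b (j div b) (j mod b))"

definition pagef :: "nat \<Rightarrow> (nat + nat) set \<Rightarrow> nat" where
  "pagef b e = pg b (THE i. Inl i \<in> e) ((THE j. Inr j \<in> e) div b) ((THE j. Inr j \<in> e) mod b)"

lemma pagef_eq: "pagef b {Inl i, Inr j} = pg b i (j div b) (j mod b)"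
proof -
  have "(THE i'. Inl i' \<in> {Inl i, Inr j}) = i" by (rule the_equality) auto
  moreover have "(THE j'. Inr j' \<in> {Inl i, Inr j}) = j" by (rule the_equality) auto
  ultimately show ?thesis unfolding pagef_def by simp
qed

lemma Bp_inj: assumes "Bp b i = Bp b i'" shows "i = i'"
proof (cases "i \<le> b")
  case True
  then show ?thesis using assms Xq_gt[of b "i'-b-1"] unfolding Bp_def by (auto split: if_splits)
next
  case False
  then show ?thesis using assms Xq_gt[of b "i-b-1"] Xq_inj[of b "i-b-1" "i'-b-1"]
    unfolding Bp_def by (auto split: if_splits)
qed

lemma Bp_Wp: assumes "t < b" shows "Bp b i \<noteq> Wp b r t"
proof (cases "i \<le> b")
  case True
  then show ?thesis using Wp_gt[of b r t] unfolding Bp_def by auto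
next
  case False
  then show ?thesis using Xq_Wp1[of "i-b-1" r b t] Xq_Wp2[of r "i-b-1" t b] assms
    unfolding Bp_def by (cases "i-b-1 < r") auto
qed

lemma Wp_inj: assumes "t < b" "t' < b" "Wp b r t = Wp b r' t'" shows "r = r' \<and> t = t'"
  using Wp_less[OF assms(1,2), of r r'] Wp_less[OF assms(2,1), of r' r] assms(3) by auto

lemma inj_posf: assumes "0 < b" shows "inj (posf b)"
proof (rule injI)
  fix u v assume h: "posf b u = posf b v"
  show "u = v"
  proof (cases u)
    case (Inl i)
    show ?thesis
    proof (cases v)
      case (Inl i') then show ?thesis using h \<open>u = Inl i\<close> Bp_inj unfolding posf_def by auto
    next
      case (Inr j') then show ?thesis using h \<open>u = Inl i\<close> Bp_Wp[of "j' mod b" b i "j' div b"] assms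
        unfolding posf_def by auto
    qed
  next
    case (Inr j)
    show ?thesis
    proof (cases v)
      case (Inl i') then show ?thesis using h \<open>u = Inr j\<close> Bp_Wp[of "j mod b" b i' "j div b"] assms
        unfolding posf_def by auto
    next
      case (Inr j')
      then have "j div b = j' div b \<and> j mod b = j' mod b"
        using h \<open>u = Inr j\<close> Wp_inj[of "j mod b" b "j' mod b" "j div b" "j' div b"] assms
        unfolding posf_def by auto
      then have "j = j'" by (metis div_mult_mod_eq)
      then show ?thesis using Inr \<open>u = Inr j\<close> by simp
    qed
  qed
qed

lemma pg_lt: assumes "t < b" "r < a" "i < a + b" "a \<le> b"
  shows "pg b i r t < a + b - 1"
  using assms unfolding pg_def by auto

lemma ab_facts: assumes "(k::nat) \<ge> 1"
  shows "1 \<le> (k+1) div 2" "(k+1) div 2 \<le> k + 1 - (k+1) div 2"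
    "(k+1) div 2 + (k + 1 - (k+1) div 2) = k + 1"
    "(k + 1)^2 div 4 = ((k+1) div 2) * (k + 1 - (k+1) div 2)"
proof -
  show "1 \<le> (k+1) div 2" "(k+1) div 2 \<le> k + 1 - (k+1) div 2"
    "(k+1) div 2 + (k + 1 - (k+1) div 2) = k + 1" using assms by auto
  obtain m where m: "k + 1 = 2*m \<or> k + 1 = 2*m+1" by (metis oddE evenE)
  then show "(k + 1)^2 div 4 = ((k+1) div 2) * (k + 1 - (k+1) div 2)"
  proof
    assume h: "k + 1 = 2*m"
    have "(k+1)^2 = 4 * (m*m)" unfolding h by (simp add: power2_eq_square)
    then show ?thesis using h by simp
  next
    assume h: "k + 1 = 2*m+1"
    have "(k+1)^2 = 4 * (m*m+m) + 1" unfolding h by (simp add: power2_eq_square algebra_simps)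
    moreover have "(k+1) div 2 = m" "k + 1 - (k+1) div 2 = m + 1" using h by auto
    ultimately show ?thesis by (simp add: algebra_simps)
  qed
qed


theorem proposition19:
  fixes k :: nat
  assumes "k \<ge> 1"
  shows "\<exists>pos page. balanced_embedding k ((k + 1)^2 div 4) pos page"
proof -
  define a where "a = (k+1) div 2"
  define b where "b = k + 1 - a"
  have a1: "1 \<le> a" and ab: "a \<le> b" and abk: "a + b = k+1" and sab: "(k+1)^2 div 4 = a*b"
    using ab_facts[OF assms] unfolding a_def b_def by auto
  have b0: "0 < b" using a1 ab by simp
  have kk: "k = a + b - 1" using abk by simp
  have white: "j div b < a" "j mod b < b" if "j < a*b" for j
    using b0 that by (simp_all add: div_less_iff_less_mult)
  have emb: "book_embedding k (KV (k+1) (a*b)) (KE (k+1) (a*b)) (posf b) (pagef b)"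
    unfolding book_embedding_def
  proof (intro conjI ballI allI impI)
    show "inj_on (posf b) (KV (k+1) (a*b))"
      using inj_posf[OF b0] unfolding inj_def inj_on_def by blast
  next
    fix e assume "e \<in> KE (k+1) (a*b)"
    then obtain i j where ij: "e = {Inl i, Inr j}" "i < k+1" "j < a*b" unfolding KE_def by auto
    show "pagef b e < k"
    proof -
      have "i < a + b" using ij(2) abk by simp
      then have "pg b i (j div b) (j mod b) < a + b - 1"
        using pg_lt[of "j mod b" b "j div b" a i] white[OF ij(3)] ab by blast
      then show ?thesis unfolding ij pagef_eq using kk by simp
    qed
  next
    fix e f u v x y assume e: "e \<in> KE (k+1) (a*b)" and f: "f \<in> KE (k+1) (a*b)"
      and h: "e = {u, v} \<and> f = {x, y} \<and> pagef b e = pagef b f"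
    obtain i j where ij: "e = {Inl i, Inr j}" "i < k+1" "j < a*b" using e unfolding KE_def by auto
    obtain i' j' where ij': "f = {Inl i', Inr j'}" "i' < k+1" "j' < a*b" using f unfolding KE_def by auto
    have pe: "pg b i (j div b) (j mod b) = pg b i' (j' div b) (j' mod b)"
      using h ij ij' pagef_eq by metis
    have core: "\<not> crossing (posf b (Inl i)) (posf b (Inr j)) (posf b (Inl i')) (posf b (Inr j'))"
      unfolding posf_def using noncross[OF white(2)[OF ij(3)] white(2)[OF ij'(3)] _ _ ab pe]
        ij ij' abk by simp
    have uv: "u = Inl i \<and> v = Inr j \<or> u = Inr j \<and> v = Inl i" using h ij by (auto simp: doubleton_eq_iff)
    have xy: "x = Inl i' \<and> y = Inr j' \<or> x = Inr j' \<and> y = Inl i'" using h ij' by (auto simp: doubleton_eq_iff)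
    show "\<not> crossing (posf b u) (posf b v) (posf b x) (posf b y)"
      using uv xy core cr_sym1 cr_sym3 by metis
  qed
  have bal: "card {p. p < k \<and> load (k+1) (pagef b) j p = 1} = k - 1" if j: "j < a*b" for j
  proof -
    define r where "r = j div b"
    define t where "t = j mod b"
    have rt: "r < a" "t < b" using white[OF j] unfolding r_def t_def by auto
    have L: "load (k+1) (pagef b) j p = (if p = r+t then 2 else 1)" if "p < k" for p
      unfolding load_def pagef_eq r_def[symmetric] t_def[symmetric] abk[symmetric]
      using load_card[OF rt(2) rt(1) ab, of p] that kk by simp
    have "{p. p < k \<and> load (k+1) (pagef b) j p = 1} = {..<k} - {r+t}"
      using L by auto
    moreover have "r + t < k" using rt kk by linarith
    ultimately show ?thesis by simp
  qed
  show ?thesis unfolding sab balanced_embedding_def using emb bal by blast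
qed

end
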